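(* Let $\Delta\vdash t$ be a closed nominal term-in-context and $\sigma$ a nominal substitution satisfying $\Delta$ with domain contained in the variables of $t$ and $t\sigma$ ground. Let $\pi_i\cdot X$ and $\pi_j\cdot X$ be two occurrences of the same variable $X$ in $t$, and let $[X\mapsto\underline{\lambda}(\overline{xs}_i).s_i]$ and $[X\mapsto\underline{\lambda}(\overline{xs}_j).s_j]$ be the substitutes obtained by the substitution translation using $\pi_i$, respectively $\pi_j$, in place of the permutation of the leftmost occurrence. Then $\underline{\lambda}(\overline{xs}_i).s_i$ and $\underline{\lambda}(\overline{xs}_j).s_j$ are $\alpha$-equivalent.
   Context: Nominal terms: $s,t ::= a \mid \pi\cdot X \mid [a]s \mid f\,s \mid (s_1,\ldots,s_n)$ over atoms, variables, function symbols and finite-support permutations $\pi$ of atoms acting on terms in the usual nominal way. A freshness context $\Delta$ is a set of constraints $a\#X$; $\sigma$ satisfies $\Delta$ if $\vdash a\#X\sigma$ for all $a\#X\in\Delta$ (standard nominal freshness). Substitutions map variables to terms, applied without avoiding capture. $\Delta\vdash t$ is closed if: (1) every atom occurrence $a$ in $t$ lies under an abstraction $[a]$; (2) if $\pi\cdot X$ is in the scope of an abstraction of $\pi(a)$ then every occurrence $\pi'\cdot X$ of $X$ in $t$ is in the scope of an abstraction of $\pi'(a)$, or $a\#X\in\Delta$; (3) for two occurrences $\pi_1\cdot X,\pi_2\cdot X$ and $a$ with $\pi_1(a)\neq\pi_2(a)$, if $a$ is not abstracted in one of the occurrences then $a\#X\in\Delta$. Translation: $\Lambda_t(X)$ is the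 set of atoms $a$ such that some occurrence of $X$ in $t$ is in the scope of $[a]$. Fix a total order on atoms. $\mathcal{T}(\Delta,u)$ maps a nominal term $u$ to a CRS meta-term by keeping atoms, abstractions, function applications and tuples and replacing each $\pi\cdot Y$ by $Y(\pi\cdot ys)$ with $ys$ the ascending list of $\{\pi^{-1}(a)\mid a\in\Lambda_u(Y)\}\setminus\{a\mid a\#Y\in\Delta\}$. For a permutation $\rho$ of an occurrence $\rho\cdot X$ of $X$ in $t$, the substitute translating $\sigma(X)$ with respect to $\rho$ is $\underline{\lambda}(\rho\cdot xs).\mathcal{T}(\Delta,\rho\cdot\sigma(X))$, where $xs$ is the ascending list of $\{\rho^{-1}(a)\mid a\in\Lambda_t(X)\}\setminus\{a\mid a\#X\in\Delta\}$ and $\rho$ is applied elementwise. A CRS substitute $\underline{\lambda}(a_1,\dots,a_n).s$ binds $a_1,\dots,a_n$ in $s$; $\alpha$-equivalence means equality up to renaming of these and other bound variables. *)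

theory Defs
  imports "HOL-Combinatorics.Perm"
begin

datatype ('a, 'v, 'f) nterm =
    Atom 'a
  | Susp "'a perm" 'v
  | Abs 'a "('a, 'v, 'f) nterm"
  | App 'f "('a, 'v, 'f) nterm"
  | Tup "('a, 'v, 'f) nterm list"

fun perm_act :: "'a perm \<Rightarrow> ('a, 'v, 'f) nterm \<Rightarrow> ('a, 'v, 'f) nterm" where
  "perm_act p (Atom a) = Atom (Perm.apply p a)"
| "perm_act p (Susp q X) = Susp (p * q) X"
| "perm_act p (Abs a s) = Abs (Perm.apply p a) (perm_act p s)"
| "perm_act p (App f s) = App f (perm_act p s)"
| "perm_act p (Tup ts) = Tup (map (perm_act p) ts)"

text \<open>Substitutions: partial maps from variables to terms, applied without avoiding capture.\<close>
type_synonym ('a, 'v, 'f) nsubst = "'v \<Rightarrow> ('a, 'v, 'f) nterm option"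

fun subst :: "('a, 'v, 'f) nsubst \<Rightarrow> ('a, 'v, 'f) nterm \<Rightarrow> ('a, 'v, 'f) nterm" where
  "subst \<sigma> (Atom a) = Atom a"
| "subst \<sigma> (Susp p X) = (case \<sigma> X of None \<Rightarrow> Susp p X | Some u \<Rightarrow> perm_act p u)"
| "subst \<sigma> (Abs a s) = Abs a (subst \<sigma> s)"
| "subst \<sigma> (App f s) = App f (subst \<sigma> s)"
| "subst \<sigma> (Tup ts) = Tup (map (subst \<sigma>) ts)"

fun vars :: "('a, 'v, 'f) nterm \<Rightarrow> 'v set" where
  "vars (Atom a) = {}"
| "vars (Susp p X) = {X}"
| "vars (Abs a s) = vars s"
| "vars (App f s) = vars s"
| "vars (Tup ts) = \<Union> (set (map vars ts))"

definition ground :: "('a, 'v, 'f) nterm \<Rightarrow> bool" where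
  "ground t \<longleftrightarrow> vars t = {}"

type_synonym ('a, 'v) fctx = "('a \<times> 'v) set"

fun fresh :: "('a, 'v) fctx \<Rightarrow> 'a \<Rightarrow> ('a, 'v, 'f) nterm \<Rightarrow> bool" where
  "fresh \<Delta> a (Atom b) \<longleftrightarrow> a \<noteq> b"
| "fresh \<Delta> a (Susp p X) \<longleftrightarrow> (Perm.apply (inverse p) a, X) \<in> \<Delta>"
| "fresh \<Delta> a (Abs b s) \<longleftrightarrow> a = b \<or> fresh \<Delta> a s"
| "fresh \<Delta> a (App f s) \<longleftrightarrow> fresh \<Delta> a s"
| "fresh \<Delta> a (Tup ts) \<longleftrightarrow> list_all (fresh \<Delta> a) ts"

definition satisfies :: "('a, 'v, 'f) nsubst \<Rightarrow> ('a, 'v) fctx \<Rightarrow> bool" where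
  "satisfies \<sigma> \<Delta> \<longleftrightarrow> (\<forall>(a, X) \<in> \<Delta>. fresh {} a (subst \<sigma> (Susp 1 X)))"

text \<open>Variable occurrences of a term: triples (B, pi, X), one for each occurrence pi . X,
  where B is the set of atoms abstracted above that occurrence (its abstraction scopes).\<close>
fun occs_in :: "'a set \<Rightarrow> ('a, 'v, 'f) nterm \<Rightarrow> ('a set \<times> 'a perm \<times> 'v) set" where
  "occs_in B (Atom a) = {}"
| "occs_in B (Susp p X) = {(B, p, X)}"
| "occs_in B (Abs a s) = occs_in (insert a B) s"
| "occs_in B (App f s) = occs_in B s"
| "occs_in B (Tup ts) = \<Union> (set (map (occs_in B) ts))"

definition occs :: "('a, 'v, 'f) nterm \<Rightarrow> ('a set \<times> 'a perm \<times> 'v) set" where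
  "occs t = occs_in {} t"

text \<open>Atom occurrences (B, a): occurrences of the atom term a, with B the abstracted atoms above.\<close>
fun atom_occs_in :: "'a set \<Rightarrow> ('a, 'v, 'f) nterm \<Rightarrow> ('a set \<times> 'a) set" where
  "atom_occs_in B (Atom a) = {(B, a)}"
| "atom_occs_in B (Susp p X) = {}"
| "atom_occs_in B (Abs a s) = atom_occs_in (insert a B) s"
| "atom_occs_in B (App f s) = atom_occs_in B s"
| "atom_occs_in B (Tup ts) = \<Union> (set (map (atom_occs_in B) ts))"

definition atom_occs :: "('a, 'v, 'f) nterm \<Rightarrow> ('a set \<times> 'a) set" where
  "atom_occs t = atom_occs_in {} t"

definition closed :: "('a, 'v) fctx \<Rightarrow> ('a, 'v, 'f) nterm \<Rightarrow> bool" where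
  "closed \<Delta> t \<longleftrightarrow>
     (\<forall>(B, a) \<in> atom_occs t. a \<in> B) \<and>
     (\<forall>(B, p, X) \<in> occs t. \<forall>a. Perm.apply p a \<in> B \<longrightarrow>
        (\<forall>(B', p', X') \<in> occs t. X' = X \<longrightarrow> Perm.apply p' a \<in> B') \<or> (a, X) \<in> \<Delta>) \<and>
     (\<forall>(B1, p1, X1) \<in> occs t. \<forall>(B2, p2, X2) \<in> occs t. \<forall>a.
        X1 = X2 \<and> Perm.apply p1 a \<noteq> Perm.apply p2 a \<and>
        (Perm.apply p1 a \<notin> B1 \<or> Perm.apply p2 a \<notin> B2) \<longrightarrow> (a, X1) \<in> \<Delta>)"

definition Lam :: "('a, 'v, 'f) nterm \<Rightarrow> 'v \<Rightarrow> 'a set" where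
  "Lam t X = {a. \<exists>B p. (B, p, X) \<in> occs t \<and> a \<in> B}"

datatype ('a, 'v, 'f) crs =
    CAtom 'a
  | CAbs 'a "('a, 'v, 'f) crs"
  | CApp 'f "('a, 'v, 'f) crs"
  | CTup "('a, 'v, 'f) crs list"
  | CMVar 'v "'a list"

definition arg_atoms :: "('a::linorder, 'v) fctx \<Rightarrow> 'a set \<Rightarrow> 'a perm \<Rightarrow> 'v \<Rightarrow> 'a list" where
  "arg_atoms \<Delta> L p Y = sorted_list_of_set ((Perm.apply (inverse p) ` L) - {a. (a, Y) \<in> \<Delta>})"

fun trans_aux :: "('a::linorder, 'v) fctx \<Rightarrow> ('v \<Rightarrow> 'a set) \<Rightarrow> ('a, 'v, 'f) nterm \<Rightarrow> ('a, 'v, 'f) crs" where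
  "trans_aux \<Delta> L (Atom a) = CAtom a"
| "trans_aux \<Delta> L (Susp p Y) = CMVar Y (map (Perm.apply p) (arg_atoms \<Delta> (L Y) p Y))"
| "trans_aux \<Delta> L (Abs a s) = CAbs a (trans_aux \<Delta> L s)"
| "trans_aux \<Delta> L (App f s) = CApp f (trans_aux \<Delta> L s)"
| "trans_aux \<Delta> L (Tup ts) = CTup (map (trans_aux \<Delta> L) ts)"

definition trans :: "('a::linorder, 'v) fctx \<Rightarrow> ('a, 'v, 'f) nterm \<Rightarrow> ('a, 'v, 'f) crs" where
  "trans \<Delta> u = trans_aux \<Delta> (Lam u) u"

text \<open>A CRS substitute lambda(a1,...,an).s is represented as the pair ([a1,...,an], s).\<close>
type_synonym ('a, 'v, 'f) substitute = "'a list \<times> ('a, 'v, 'f) crs"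

text \<open>The substitute translating sigma(X) with respect to the permutation rho of an occurrence
  rho . X of X in t:  lambda(rho . xs). T(Delta, rho . sigma(X)).\<close>
definition subst_trans ::
  "('a::linorder, 'v) fctx \<Rightarrow> ('a, 'v, 'f) nterm \<Rightarrow> ('a, 'v, 'f) nsubst \<Rightarrow> 'v \<Rightarrow> 'a perm
     \<Rightarrow> ('a, 'v, 'f) substitute" where
  "subst_trans \<Delta> t \<sigma> X \<rho> =
     (map (Perm.apply \<rho>) (arg_atoms \<Delta> (Lam t X) \<rho> X),
      trans \<Delta> (perm_act \<rho> (the (\<sigma> X))))"

text \<open>Bound atoms are tracked by an environment of pairs of corresponding binders,
  innermost first.\<close>
fun bvar_eq :: "('a \<times> 'a) list \<Rightarrow> 'a \<Rightarrow> 'a \<Rightarrow> bool" where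
  "bvar_eq [] a b \<longleftrightarrow> a = b"
| "bvar_eq ((x, y) # env) a b \<longleftrightarrow>
     (if a = x \<or> b = y then a = x \<and> b = y else bvar_eq env a b)"

fun alpha :: "('a \<times> 'a) list \<Rightarrow> ('a, 'v, 'f) crs \<Rightarrow> ('a, 'v, 'f) crs \<Rightarrow> bool"
and alpha_list :: "('a \<times> 'a) list \<Rightarrow> ('a, 'v, 'f) crs list \<Rightarrow> ('a, 'v, 'f) crs list \<Rightarrow> bool" where
  "alpha env (CAtom a) (CAtom b) \<longleftrightarrow> bvar_eq env a b"
| "alpha env (CAbs a s) (CAbs b u) \<longleftrightarrow> alpha ((a, b) # env) s u"
| "alpha env (CApp f s) (CApp g u) \<longleftrightarrow> f = g \<and> alpha env s u"
| "alpha env (CTup ss) (CTup us) \<longleftrightarrow> alpha_list env ss us"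
| "alpha env (CMVar X as) (CMVar Y bs) \<longleftrightarrow> X = Y \<and> list_all2 (bvar_eq env) as bs"
| "alpha env _ _ \<longleftrightarrow> False"
| "alpha_list env [] [] \<longleftrightarrow> True"
| "alpha_list env (s # ss) (u # us) \<longleftrightarrow> alpha env s u \<and> alpha_list env ss us"
| "alpha_list env _ _ \<longleftrightarrow> False"

text \<open>lambda(a1..an).s and lambda(b1..bm).u are alpha-equivalent: n = m and the bodies are
  alpha-equivalent with a_i corresponding to b_i (later binders shadow earlier ones).\<close>
definition alpha_substitute :: "('a, 'v, 'f) substitute \<Rightarrow> ('a, 'v, 'f) substitute \<Rightarrow> bool" where
  "alpha_substitute S1 S2 \<longleftrightarrow>
     length (fst S1) = length (fst S2) \<and> alpha (rev (zip (fst S1) (fst S2))) (snd S1) (snd S2)"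

end

theory Submission
  imports Defs
begin

lemma inv_app1 [simp]: "Perm.apply (inverse p) (Perm.apply p c) = c"
  by (simp add: apply_sequence)

lemma inv_app2 [simp]: "Perm.apply p (Perm.apply (inverse p) c) = c"
  by (simp add: apply_sequence)

lemma perm_act_one: "perm_act 1 s = s"
  by (induction s) (auto simp: map_idI)

fun fa :: "('a, 'v, 'f) nterm \<Rightarrow> 'a set" where
  "fa (Atom a) = {a}"
| "fa (Susp p X) = {}"
| "fa (Abs a s) = fa s - {a}"
| "fa (App f s) = fa s"
| "fa (Tup ts) = \<Union> (set (map fa ts))"

lemma fresh_fa: "fresh {} a s \<Longrightarrow> a \<notin> fa s"
  by (induction s) (auto simp: list_all_iff)

lemma vars_perm: "vars (perm_act p s) = vars s"
  by (induction s) auto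

lemma bvar_eq_zip:
  "c \<in> set ys \<or> Perm.apply p c = Perm.apply q c \<Longrightarrow>
   bvar_eq (map (\<lambda>c. (Perm.apply p c, Perm.apply q c)) ys) (Perm.apply p c) (Perm.apply q c)"
  by (induction ys) (auto simp: apply_inj)

lemma alpha_map:
  "(\<And>x. x \<in> set ts \<Longrightarrow> alpha env (f x) (g x)) \<Longrightarrow> alpha_list env (map f ts) (map g ts)"
  by (induction ts) auto

lemma alpha_ground:
  "vars s = {} \<Longrightarrow> (\<forall>c\<in>fa s. bvar_eq env (Perm.apply p c) (Perm.apply q c)) \<Longrightarrow>
   alpha env (trans_aux \<Delta> L1 (perm_act p s)) (trans_aux \<Delta> L2 (perm_act q s))"
proof (induction s arbitrary: env)
  case (Atom a)
  then show ?case by simp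
next
  case (Susp x1 x2)
  then show ?case by simp
next
  case (Abs a s)
  have "\<forall>c\<in>fa s. bvar_eq ((Perm.apply p a, Perm.apply q a) # env) (Perm.apply p c) (Perm.apply q c)"
  proof
    fix c assume c: "c \<in> fa s"
    show "bvar_eq ((Perm.apply p a, Perm.apply q a) # env) (Perm.apply p c) (Perm.apply q c)"
    proof (cases "c = a")
      case True then show ?thesis by simp
    next
      case False
      then have "bvar_eq env (Perm.apply p c) (Perm.apply q c)" using Abs.prems(2) c by simp
      moreover have "Perm.apply p c \<noteq> Perm.apply p a" "Perm.apply q c \<noteq> Perm.apply q a"
        using False by (simp_all add: apply_inj)
      ultimately show ?thesis by simp
    qed
  qed
  moreover have "vars s = {}" using Abs.prems(1) by simp
  ultimately have "alpha ((Perm.apply p a, Perm.apply q a) # env)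
      (trans_aux \<Delta> L1 (perm_act p s)) (trans_aux \<Delta> L2 (perm_act q s))"
    by (metis Abs.IH)
  then show ?case by simp
next
  case (App f s)
  then show ?case by simp
next
  case (Tup ts)
  have "alpha env (trans_aux \<Delta> L1 (perm_act p x)) (trans_aux \<Delta> L2 (perm_act q x))"
    if x: "x \<in> set ts" for x
  proof (rule Tup.IH[OF x])
    show "vars x = {}" using Tup.prems(1) x by auto
    show "\<forall>c\<in>fa x. bvar_eq env (Perm.apply p c) (Perm.apply q c)"
      using Tup.prems(2) x by auto
  qed
  then have "alpha_list env (map (\<lambda>x. trans_aux \<Delta> L1 (perm_act p x)) ts)
      (map (\<lambda>x. trans_aux \<Delta> L2 (perm_act q x)) ts)"
    by (rule alpha_map)
  then show ?case by (simp add: comp_def)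
qed

lemma occs_none:
  "(B', p, X) \<in> occs_in B t \<Longrightarrow> \<sigma> X = None \<Longrightarrow> X \<in> vars (subst \<sigma> t)"
  by (induction t arbitrary: B) auto

lemma occs_some:
  "(B', p, X) \<in> occs_in B t \<Longrightarrow> \<sigma> X = Some u \<Longrightarrow> vars u \<subseteq> vars (subst \<sigma> t)"
  by (induction t arbitrary: B) (auto simp: vars_perm)

lemma occs_finite: "finite (occs_in B t)"
  by (induction t arbitrary: B) auto

lemma occs_fin_B: "finite B \<Longrightarrow> (B', p, X) \<in> occs_in B t \<Longrightarrow> finite B'"
  by (induction t arbitrary: B) auto

lemma Lam_finite: "finite (Lam t X)"
proof -
  have "Lam t X \<subseteq> \<Union> (fst ` occs t)"
    unfolding Lam_def by force
  moreover have "finite (\<Union> (fst ` occs t))"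
    using occs_finite[of "{}" t] occs_fin_B[of "{}" _ _ _ t]
    by (auto simp: occs_def)
  ultimately show ?thesis by (rule finite_subset)
qed

theorem mainTheorem10:
  fixes \<Delta> :: "('a::linorder, 'v) fctx"
    and t :: "('a, 'v, 'f) nterm"
    and \<sigma> :: "('a, 'v, 'f) nsubst"
    and X :: 'v and \<pi>i \<pi>j :: "'a perm" and Bi Bj :: "'a set"
  assumes "infinite (UNIV :: 'a set)"
    and cl: "closed \<Delta> t"
    and sat: "satisfies \<sigma> \<Delta>"
    and "dom \<sigma> \<subseteq> vars t"
    and gr: "ground (subst \<sigma> t)"
    and oi: "(Bi, \<pi>i, X) \<in> occs t"
    and oj: "(Bj, \<pi>j, X) \<in> occs t"
  shows "alpha_substitute (subst_trans \<Delta> t \<sigma> X \<pi>i) (subst_trans \<Delta> t \<sigma> X \<pi>j)"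
proof -
  obtain u where u: "\<sigma> X = Some u"
    using occs_none[of Bi \<pi>i X "{}" t \<sigma>] oi gr by (cases "\<sigma> X") (auto simp: occs_def ground_def)
  have ug: "vars u = {}"
    using occs_some[of Bi \<pi>i X "{}" t \<sigma> u] oi gr u by (auto simp: occs_def ground_def)
  define L where "L = Lam t X"
  define D where "D = {a. (a, X) \<in> \<Delta>}"
  have Dfresh: "c \<in> fa u \<Longrightarrow> c \<notin> D" for c
    using sat u fresh_fa[of c u] by (auto simp: satisfies_def D_def perm_act_one)
  have h3: "\<And>B1 p1 X1 B2 p2 X2 a. (B1,p1,X1)\<in>occs t \<Longrightarrow> (B2,p2,X2)\<in>occs t \<Longrightarrow>
      X1 = X2 \<Longrightarrow> Perm.apply p1 a \<noteq> Perm.apply p2 a \<Longrightarrow>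
      (Perm.apply p1 a \<notin> B1 \<or> Perm.apply p2 a \<notin> B2) \<Longrightarrow> (a, X1) \<in> \<Delta>"
  proof -
    fix B1 p1 X1 B2 p2 X2 a
    assume o1: "(B1,p1,X1)\<in>occs t" and o2: "(B2,p2,X2)\<in>occs t" and e: "X1 = X2"
      and ne: "Perm.apply p1 a \<noteq> Perm.apply p2 a"
      and nb: "Perm.apply p1 a \<notin> B1 \<or> Perm.apply p2 a \<notin> B2"
    have C3: "\<forall>(B1, p1, X1) \<in> occs t. \<forall>(B2, p2, X2) \<in> occs t. \<forall>a.
        X1 = X2 \<and> Perm.apply p1 a \<noteq> Perm.apply p2 a \<and>
        (Perm.apply p1 a \<notin> B1 \<or> Perm.apply p2 a \<notin> B2) \<longrightarrow> (a, X1) \<in> \<Delta>"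
      using cl unfolding closed_def by (elim conjE)
    have "\<forall>(B2, p2, X2) \<in> occs t. \<forall>a.
        X1 = X2 \<and> Perm.apply p1 a \<noteq> Perm.apply p2 a \<and>
        (Perm.apply p1 a \<notin> B1 \<or> Perm.apply p2 a \<notin> B2) \<longrightarrow> (a, X1) \<in> \<Delta>"
      using bspec[OF C3 o1] by simp
    then have "\<forall>a. X1 = X2 \<and> Perm.apply p1 a \<noteq> Perm.apply p2 a \<and>
        (Perm.apply p1 a \<notin> B1 \<or> Perm.apply p2 a \<notin> B2) \<longrightarrow> (a, X1) \<in> \<Delta>"
      using o2 by (drule_tac x="(B2,p2,X2)" in bspec) simp_all
    then show "(a, X1) \<in> \<Delta>" using e ne nb by blast
  qed
  have c3: "c \<in> D" if "Perm.apply \<pi>i c \<noteq> Perm.apply \<pi>j c"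
      "Perm.apply \<pi>i c \<notin> Bi \<or> Perm.apply \<pi>j c \<notin> Bj" for c
    using h3[OF oi oj refl that] unfolding D_def by simp
  have c3': "c \<in> D" if "Perm.apply \<pi>j c \<noteq> Perm.apply \<pi>i c"
      "Perm.apply \<pi>j c \<notin> Bj \<or> Perm.apply \<pi>i c \<notin> Bi" for c
    using c3 that by auto
  have BiL: "Bi \<subseteq> L" and BjL: "Bj \<subseteq> L" using oi oj by (auto simp: L_def Lam_def)
  have memS: "c \<in> Perm.apply (inverse \<rho>) ` L \<longleftrightarrow> Perm.apply \<rho> c \<in> L" for \<rho> c
  proof
    assume "c \<in> Perm.apply (inverse \<rho>) ` L"
    then show "Perm.apply \<rho> c \<in> L" by auto
  next
    assume "Perm.apply \<rho> c \<in> L"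
    then have "Perm.apply (inverse \<rho>) (Perm.apply \<rho> c) \<in> Perm.apply (inverse \<rho>) ` L" by (rule imageI)
    then show "c \<in> Perm.apply (inverse \<rho>) ` L" by simp
  qed
  have Seq: "Perm.apply (inverse \<pi>i) ` L - D = Perm.apply (inverse \<pi>j) ` L - D"
  proof (rule set_eqI)
    fix c
    show "c \<in> Perm.apply (inverse \<pi>i) ` L - D \<longleftrightarrow> c \<in> Perm.apply (inverse \<pi>j) ` L - D"
    proof
      assume "c \<in> Perm.apply (inverse \<pi>i) ` L - D"
      then have a: "Perm.apply \<pi>i c \<in> L" "c \<notin> D" using memS by auto
      have "Perm.apply \<pi>j c \<in> L"
      proof (cases "Perm.apply \<pi>j c \<in> Bj")
        case True then show ?thesis using BjL by auto
      next
        case False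
        then have "Perm.apply \<pi>i c = Perm.apply \<pi>j c" using c3 a(2) by auto
        then show ?thesis using a by simp
      qed
      then show "c \<in> Perm.apply (inverse \<pi>j) ` L - D" using memS a(2) by auto
    next
      assume "c \<in> Perm.apply (inverse \<pi>j) ` L - D"
      then have a: "Perm.apply \<pi>j c \<in> L" "c \<notin> D" using memS by auto
      have "Perm.apply \<pi>i c \<in> L"
      proof (cases "Perm.apply \<pi>i c \<in> Bi")
        case True then show ?thesis using BiL by auto
      next
        case False
        then have "Perm.apply \<pi>i c = Perm.apply \<pi>j c" using c3 a(2) by auto
        then show ?thesis using a by simp
      qed
      then show "c \<in> Perm.apply (inverse \<pi>i) ` L - D" using memS a(2) by auto
    qed
  qed
  define S where "S = Perm.apply (inverse \<pi>i) ` L - D"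
  have finS: "finite S" unfolding S_def L_def by (intro finite_Diff finite_imageI Lam_finite)
  define xs where "xs = sorted_list_of_set S"
  have A: "arg_atoms \<Delta> (Lam t X) \<pi>i X = xs" "arg_atoms \<Delta> (Lam t X) \<pi>j X = xs"
    unfolding arg_atoms_def xs_def S_def L_def D_def using Seq by (auto simp: L_def D_def)
  have env: "rev (zip (map (Perm.apply \<pi>i) xs) (map (Perm.apply \<pi>j) xs))
      = map (\<lambda>c. (Perm.apply \<pi>i c, Perm.apply \<pi>j c)) (rev xs)"
    by (simp add: zip_map_map zip_same_conv_map rev_map)
  have fa_ok: "\<forall>c\<in>fa u. bvar_eq (map (\<lambda>c. (Perm.apply \<pi>i c, Perm.apply \<pi>j c)) (rev xs))
        (Perm.apply \<pi>i c) (Perm.apply \<pi>j c)"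
  proof
    fix c assume c: "c \<in> fa u"
    have "c \<in> set (rev xs) \<or> Perm.apply \<pi>i c = Perm.apply \<pi>j c"
    proof (cases "Perm.apply \<pi>i c = Perm.apply \<pi>j c")
      case False
      then have "Perm.apply \<pi>i c \<in> Bi" using c3 Dfresh c by blast
      then have "c \<in> S" using BiL Dfresh c memS unfolding S_def by blast
      then show ?thesis using finS by (simp add: xs_def)
    qed simp
    then show "bvar_eq (map (\<lambda>c. (Perm.apply \<pi>i c, Perm.apply \<pi>j c)) (rev xs))
        (Perm.apply \<pi>i c) (Perm.apply \<pi>j c)" by (rule bvar_eq_zip)
  qed
  have al: "alpha (rev (zip (map (Perm.apply \<pi>i) xs) (map (Perm.apply \<pi>j) xs)))
     (trans_aux \<Delta> (Lam (perm_act \<pi>i u)) (perm_act \<pi>i u))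
     (trans_aux \<Delta> (Lam (perm_act \<pi>j u)) (perm_act \<pi>j u))"
    unfolding env by (rule alpha_ground[OF ug fa_ok])
  have ei: "subst_trans \<Delta> t \<sigma> X \<pi>i = (map (Perm.apply \<pi>i) xs, trans_aux \<Delta> (Lam (perm_act \<pi>i u)) (perm_act \<pi>i u))"
    unfolding subst_trans_def A(1) trans_def u option.sel by (rule refl)
  have ej: "subst_trans \<Delta> t \<sigma> X \<pi>j = (map (Perm.apply \<pi>j) xs, trans_aux \<Delta> (Lam (perm_act \<pi>j u)) (perm_act \<pi>j u))"
    unfolding subst_trans_def A(2) trans_def u option.sel by (rule refl)
  have fin: "alpha_substitute (map (Perm.apply \<pi>i) xs, trans_aux \<Delta> (Lam (perm_act \<pi>i u)) (perm_act \<pi>i u))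
     (map (Perm.apply \<pi>j) xs, trans_aux \<Delta> (Lam (perm_act \<pi>j u)) (perm_act \<pi>j u))"
    unfolding alpha_substitute_def prod.sel length_map
    using al by (intro conjI refl)
  show ?thesis
    unfolding ei ej by (rule fin)
qed

end
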